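(* Let $\mathcal A$ and $\mathcal B$ be collections, and set $\mathcal B_\Gamma=\{B\in\mathcal B:\text{every infinite }B'\subseteq B\text{ belongs to }\mathcal B\}$. If $\mathcal A$ is a filter base, then $\mathrm{I}\uparrow G_1(\mathcal A,\neg\mathcal B)$ if and only if $\mathrm{I}\uparrow G_1(\mathcal A,\neg\mathcal B_\Gamma)$.
   Context: $\mathcal A$ is a filter base if its members are nonempty sets and for all $A_1,A_2\in\mathcal A$ there is $A_3\in\mathcal A$ with $A_3\subseteq A_1\cap A_2$. For collections $\mathcal E,\mathcal C$, in the game $G_1(\mathcal E,\mathcal C)$, at each inning $n\in\omega$ player One plays $E_n\in\mathcal E$ and Two picks $x_n\in E_n$; Two wins iff $\{x_n:n\in\omega\}\in\mathcal C$, otherwise One wins. $\neg\mathcal C$ is the complement of $\mathcal C$ (so Two wins $G_1(\mathcal E,\neg\mathcal C)$ iff $\{x_n:n\in\omega\}\notin\mathcal C$). A strategy for One maps each finite sequence of Two's previous moves to a move in $\mathcal E$; it is winning if One wins every play following it. $\mathrm{I}\uparrow G$ means One has a winning strategy in $G$. *)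

theory Defs
  imports Main
begin

definition filter_base :: "'a set set \<Rightarrow> bool" where
  "filter_base \<A> \<longleftrightarrow> (\<forall>A\<in>\<A>. A \<noteq> {}) \<and>
     (\<forall>A1\<in>\<A>. \<forall>A2\<in>\<A>. \<exists>A3\<in>\<A>. A3 \<subseteq> A1 \<inter> A2)"

text \<open>A strategy for One in G_1(E, C) maps each finite sequence of Two's previous
  moves to a member of E.\<close>
definition one_strategy :: "'a set set \<Rightarrow> ('a list \<Rightarrow> 'a set) \<Rightarrow> bool" where
  "one_strategy E \<sigma> \<longleftrightarrow> (\<forall>s. \<sigma> s \<in> E)"

definition follows_strategy :: "('a list \<Rightarrow> 'a set) \<Rightarrow> (nat \<Rightarrow> 'a) \<Rightarrow> bool" where
  "follows_strategy \<sigma> x \<longleftrightarrow> (\<forall>n. x n \<in> \<sigma> (map x [0..<n]))"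

text \<open>One has a winning strategy in G_1(E, C): Two wins a play iff the set of
  Two's picks belongs to C.\<close>
definition one_wins_G1 :: "'a set set \<Rightarrow> 'a set set \<Rightarrow> bool" where
  "one_wins_G1 E C \<longleftrightarrow>
     (\<exists>\<sigma>. one_strategy E \<sigma> \<and> (\<forall>x. follows_strategy \<sigma> x \<longrightarrow> range x \<notin> C))"

definition Gamma_part :: "'a set set \<Rightarrow> 'a set set" where
  "Gamma_part \<B> = {B \<in> \<B>. \<forall>B'. B' \<subseteq> B \<and> infinite B' \<longrightarrow> B' \<in> \<B>}"

end

theory Submission
  imports Defs "HOL-Library.Infinite_Set"
begin

lemma fb_inter:
  assumes fb: "filter_base A" and "finite F" "F \<noteq> {}" "F \<subseteq> A"
  shows "\<exists>A3\<in>A. A3 \<subseteq> \<Inter>F"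
  using assms(2,3,4)
proof (induction F rule: finite_ne_induct)
  case (singleton x) then show ?case by auto
next
  case (insert x F)
  then obtain B where B: "B \<in> A" "B \<subseteq> \<Inter>F" by auto
  have "x \<in> A" using insert.prems by simp
  then obtain C where "C \<in> A" "C \<subseteq> x \<inter> B"
    using fb B(1) unfolding filter_base_def by meson
  then show ?case using B by auto
qed

theorem mainTheorem3:
  fixes \<A> \<B> :: "'a set set"
  assumes "filter_base \<A>"
  shows "one_wins_G1 \<A> (- \<B>) \<longleftrightarrow> one_wins_G1 \<A> (- Gamma_part \<B>)"
proof
  assume "one_wins_G1 \<A> (- Gamma_part \<B>)"
  then show "one_wins_G1 \<A> (- \<B>)" unfolding one_wins_G1_def Gamma_part_def by blast
next
  assume "one_wins_G1 \<A> (- \<B>)"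
  then obtain \<sigma> where s: "one_strategy \<A> \<sigma>"
    and w: "\<And>x. follows_strategy \<sigma> x \<Longrightarrow> range x \<in> \<B>"
    unfolding one_wins_G1_def by auto
  define T where "T s = \<sigma> ` {t. set t \<subseteq> set s \<and> length t \<le> length s}" for s
  have "\<exists>A3\<in>\<A>. A3 \<subseteq> \<Inter>(T s)" for s
  proof (rule fb_inter[OF assms])
    show "finite (T s)" unfolding T_def by (intro finite_imageI finite_lists_length_le) simp
    show "T s \<noteq> {}" unfolding T_def by auto
    show "T s \<subseteq> \<A>" using s unfolding T_def one_strategy_def by auto
  qed
  then obtain \<tau> where tA: "\<And>s. \<tau> s \<in> \<A>" and tT: "\<And>s. \<tau> s \<subseteq> \<Inter>(T s)" by metis
  have sub: "\<tau> s \<subseteq> \<sigma> t" if "set t \<subseteq> set s" "length t \<le> length s" for s t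
    using tT[of s] that unfolding T_def by auto
  have "\<forall>x. follows_strategy \<tau> x \<longrightarrow> range x \<in> Gamma_part \<B>"
  proof (intro allI impI)
    fix x assume fx: "follows_strategy \<tau> x"
    have xt: "x n \<in> \<tau> (map x [0..<n])" for n using fx unfolding follows_strategy_def by auto
    have "follows_strategy \<sigma> x"
      unfolding follows_strategy_def using xt sub by blast
    then have r: "range x \<in> \<B>" by (rule w)
    have "B' \<in> \<B>" if B': "B' \<subseteq> range x" "infinite B'" for B'
    proof -
      define K where "K = {k. x k \<in> B' \<and> (\<forall>j<k. x j \<noteq> x k)}"
      have xK: "x ` K = B'"
      proof
        show "x ` K \<subseteq> B'" unfolding K_def by auto
        show "B' \<subseteq> x ` K"
        proof
          fix b assume "b \<in> B'"
          then obtain j where "x j = b" using B' by auto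
          define m where "m = (LEAST j. x j = b)"
          have "x m = b" unfolding m_def by (rule LeastI) fact
          moreover have "\<forall>j<m. x j \<noteq> x m"
          proof (intro allI impI)
            fix i assume "i < m"
            then have "\<not> x i = b" unfolding m_def by (rule not_less_Least)
            then show "x i \<noteq> x m" using \<open>x m = b\<close> by simp
          qed
          ultimately have "m \<in> K" unfolding K_def using \<open>b \<in> B'\<close> by simp
          then show "b \<in> x ` K" using \<open>x m = b\<close> by blast
        qed
      qed
      have Kinf: "infinite K" using xK B'(2) finite_imageI by metis
      define k where "k = enumerate K"
      have rk: "range k = K" and sk: "strict_mono k"
        unfolding k_def using range_enumerate[OF Kinf] strict_mono_enumerate[OF Kinf] by auto
      define y where "y n = x (k n)" for n
      have "range y = x ` range k" unfolding y_def by (simp add: image_image)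
      then have "range y = B'" using xK rk by simp
      moreover have "follows_strategy \<sigma> y"
        unfolding follows_strategy_def
      proof
        fix n
        have "y n \<in> \<tau> (map x [0..<k n])" unfolding y_def by (rule xt)
        moreover have "set (map y [0..<n]) \<subseteq> set (map x [0..<k n])"
          using sk unfolding y_def strict_mono_def by auto
        moreover have "length (map y [0..<n]) \<le> length (map x [0..<k n])"
          using strict_mono_imp_increasing[OF sk] by simp
        ultimately show "y n \<in> \<sigma> (map y [0..<n])" using sub by blast
      qed
      ultimately show ?thesis using w by metis
    qed
    then show "range x \<in> Gamma_part \<B>" using r unfolding Gamma_part_def by auto
  qed
  then show "one_wins_G1 \<A> (- Gamma_part \<B>)"
    unfolding one_wins_G1_def one_strategy_def using tA by auto
qed

end
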